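(* Let $M=(Q,\underline q,\Sigma_I,\Sigma_O,h)$ be a deterministic, completely specified prime FSM with $n=|Q|\ge 2$ states and output function $\omega_M$, and let $R=R(q_1,x_1,Z_1)\wedge\dots\wedge R(q_k,x_k,Z_k)$ be a composite requirement on $M$ (with the pairs $(q_i,x_i)$ pairwise distinct, $\omega_M(q_i,x_i)\in Z_i\subsetneq\Sigma_O$). Let $M_1$ be the requirement abstraction of $M$, let $V\subseteq\Sigma_I^*$ with $\varepsilon\in V$ be a state cover of $M$, let $m\ge n$ be an integer, and let $A,B,C$, $\Delta_M$, $\Delta_{M_1}$, $A(M)$, $B(M_1)$, $C(M_1)$ be as defined in the context. Let $S=(S,\underline s,\Sigma_I,\Sigma_O,h_S)$ be a minimal, completely specified DFSM with $|S|\le m$. Let $TS\subseteq\Sigma_I^*$ be any test suite satisfying (1) $V.\bigcup_{i=0}^{m-n+1}\Sigma_I^i\subseteq TS$, and (2) for all $(\alpha,\beta)\in A(M)\cup B(M_1)\cup C(M_1)$ there exists $\gamma\in\Delta_M(\alpha,\beta)$ with $\alpha.\gamma\in TS$ and $\beta.\gamma\in TS$. Then if $S$ passes $TS$ (i.e. $\omega_S(\underline s,\bar x)=\omega_M(\underline q,\bar x)$ for every $\bar x\in TS$), it follows that $S\models R$.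
   Context: FSMs, DFSMs, languages, the extended transition/output functions $\delta,\omega$, the notation $q\text{-after-}\bar x=\delta(q,\bar x)$ and prime machines are as usual: a completely specified DFSM has for every (state,input) exactly one transition, given by $\delta(q,x)$ and output $\omega(q,x)$; these extend to input sequences by $\delta(q,\varepsilon)=q$, $\delta(q,x.\bar x)=\delta(\delta(q,x),\bar x)$, $\omega(q,\varepsilon)=\varepsilon$, $\omega(q,x.\bar x)=\omega(q,x).\omega(\delta(q,x),\bar x)$. A prime machine has minimal number of states among language-equivalent DFSMs. A state cover of $M$ is a set $V\subseteq\Sigma_I^*$ such that every state $q$ equals $\underline q\text{-after-}v$ for some $v\in V$. For sets of traces, $X.Y=\{x.y\mid x\in X,y\in Y\}$. Requirements: $\Pi(q)=\{\bar x\in\Sigma_I^*\mid \underline q\text{-after-}\bar x=q\}$ (computed in $M$). $S\models R(q,x,Z)$ iff $\omega_S(\underline s\text{-after-}\pi,x)\in Z$ for all $\pi\in\Pi(q)$; $S\models R$ for a conjunction iff $S$ satisfies every conjunct. Requirement abstraction $M_1$: the completely specified DFSM with state set $Q$, initial state $\underline q$, input alphabet $\Sigma_I$, output alphabet $\{\ast,Z_1,\dots,Z_k\}$ where $\ast=\Sigma_O$, transition function equal to that of $M$, and output function $\omega_{M_1}(q_i,x_i)=Z_i$ for $i=1,\dots,k$ and $\omega_{M_1}(q,x)=\ast$ for all other $(q,x)\in Q\times\Sigma_I$. Trace-pair sets: $A=V\times V$; $B=V\times\big(V.\bigcup_{i=1}^{m-n+1}\Sigma_I^i\big)$; $C=\{(\alpha,\beta)\mid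 \alpha$ is a prefix of $\beta$, $\alpha,\beta\in V.\bigcup_{i=1}^{m-n+1}\Sigma_I^i\}$. For input traces $\alpha,\beta$: $\Delta_M(\alpha,\beta)=\{\gamma\in\Sigma_I^*\mid\omega_M(\underline q\text{-after-}\alpha,\gamma)\ne\omega_M(\underline q\text{-after-}\beta,\gamma)\}$ and $\Delta_{M_1}(\alpha,\beta)$ is defined analogously with $\omega_{M_1}$. For a set $P$ of trace pairs, $P(M)=\{(\alpha,\beta)\in P\mid\Delta_M(\alpha,\beta)\neq\varnothing\}$ and $P(M_1)=\{(\alpha,\beta)\in P\mid\Delta_{M_1}(\alpha,\beta)\neq\varnothing\}$. *)

theory Defs
  imports Main
begin

text \<open>The input alphabet is UNIV of the (finite) input type, the output
alphabet is UNIV of the (finite) output type.\<close>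

definition dfsm :: "'s set \<Rightarrow> 's \<Rightarrow> ('s \<Rightarrow> 'i \<Rightarrow> 's) \<Rightarrow> ('s \<Rightarrow> 'i \<Rightarrow> 'o) \<Rightarrow> bool" where
  "dfsm Q q0 d w \<longleftrightarrow> finite Q \<and> q0 \<in> Q \<and> (\<forall>q\<in>Q. \<forall>x. d q x \<in> Q)"

fun delta_star :: "('s \<Rightarrow> 'i \<Rightarrow> 's) \<Rightarrow> 's \<Rightarrow> 'i list \<Rightarrow> 's" where
  "delta_star d q [] = q"
| "delta_star d q (x # xs) = delta_star d (d q x) xs"

fun omega_star :: "('s \<Rightarrow> 'i \<Rightarrow> 's) \<Rightarrow> ('s \<Rightarrow> 'i \<Rightarrow> 'o) \<Rightarrow> 's \<Rightarrow> 'i list \<Rightarrow> 'o list" where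
  "omega_star d w q [] = []"
| "omega_star d w q (x # xs) = w q x # omega_star d w (d q x) xs"

definition fsm_lang :: "'s \<Rightarrow> ('s \<Rightarrow> 'i \<Rightarrow> 's) \<Rightarrow> ('s \<Rightarrow> 'i \<Rightarrow> 'o) \<Rightarrow> ('i \<times> 'o) list set" where
  "fsm_lang q0 d w = {zip xs (omega_star d w q0 xs) | xs. True}"

text \<open>Prime / minimal: minimal number of states among all language-equivalent
DFSMs (competitors are taken with states in nat, which loses no generality
since every finite state set can be relabelled into nat).\<close>
definition prime_dfsm :: "'s set \<Rightarrow> 's \<Rightarrow> ('s \<Rightarrow> 'i \<Rightarrow> 's) \<Rightarrow> ('s \<Rightarrow> 'i \<Rightarrow> 'o) \<Rightarrow> bool" where
  "prime_dfsm Q q0 d w \<longleftrightarrow> dfsm Q q0 d w \<and>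
     (\<forall>(Q'::nat set) q0' d' (w' :: nat \<Rightarrow> 'i \<Rightarrow> 'o).
        dfsm Q' q0' d' w' \<and> fsm_lang q0' d' w' = fsm_lang q0 d w \<longrightarrow> card Q \<le> card Q')"

definition state_cover :: "'i list set \<Rightarrow> 's set \<Rightarrow> 's \<Rightarrow> ('s \<Rightarrow> 'i \<Rightarrow> 's) \<Rightarrow> bool" where
  "state_cover V Q q0 d \<longleftrightarrow> (\<forall>q\<in>Q. \<exists>v\<in>V. delta_star d q0 v = q)"

definition Pi_set :: "'s \<Rightarrow> ('s \<Rightarrow> 'i \<Rightarrow> 's) \<Rightarrow> 's \<Rightarrow> 'i list set" where
  "Pi_set q0 d q = {xs. delta_star d q0 xs = q}"

definition sat_req :: "'t \<Rightarrow> ('t \<Rightarrow> 'i \<Rightarrow> 't) \<Rightarrow> ('t \<Rightarrow> 'i \<Rightarrow> 'o)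
     \<Rightarrow> 's \<Rightarrow> ('s \<Rightarrow> 'i \<Rightarrow> 's) \<Rightarrow> ('s \<times> 'i \<times> 'o set) \<Rightarrow> bool" where
  "sat_req s0 dS wS q0 d r = (case r of (q, x, Z) \<Rightarrow>
     (\<forall>\<pi>\<in>Pi_set q0 d q. wS (delta_star dS s0 \<pi>) x \<in> Z))"

definition sat_reqs :: "'t \<Rightarrow> ('t \<Rightarrow> 'i \<Rightarrow> 't) \<Rightarrow> ('t \<Rightarrow> 'i \<Rightarrow> 'o)
     \<Rightarrow> 's \<Rightarrow> ('s \<Rightarrow> 'i \<Rightarrow> 's) \<Rightarrow> ('s \<times> 'i \<times> 'o set) list \<Rightarrow> bool" where
  "sat_reqs s0 dS wS q0 d R \<longleftrightarrow> (\<forall>r\<in>set R. sat_req s0 dS wS q0 d r)"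

text \<open>Requirement abstraction: output function of M1 (outputs are sets of outputs;
* = UNIV = Sigma_O). Transitions of M1 equal those of M.\<close>
definition abs_output :: "('s \<times> 'i \<times> 'o set) list \<Rightarrow> 's \<Rightarrow> 'i \<Rightarrow> 'o set" where
  "abs_output R q x = (case map_of (map (\<lambda>(q, x, Z). ((q, x), Z)) R) (q, x) of
       Some Z \<Rightarrow> Z | None \<Rightarrow> UNIV)"

definition ext_set :: "'i list set \<Rightarrow> nat \<Rightarrow> nat \<Rightarrow> 'i list set" where
  "ext_set V lo hi = {v @ u | v u. v \<in> V \<and> lo \<le> length u \<and> length u \<le> hi}"

definition Delta :: "'s \<Rightarrow> ('s \<Rightarrow> 'i \<Rightarrow> 's) \<Rightarrow> ('s \<Rightarrow> 'i \<Rightarrow> 'o) \<Rightarrow> 'i list \<Rightarrow> 'i list \<Rightarrow> 'i list set" where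
  "Delta q0 d w \<alpha> \<beta> = {\<gamma>. omega_star d w (delta_star d q0 \<alpha>) \<gamma> \<noteq> omega_star d w (delta_star d q0 \<beta>) \<gamma>}"

definition pairs_A :: "'i list set \<Rightarrow> ('i list \<times> 'i list) set" where
  "pairs_A V = V \<times> V"

definition pairs_B :: "'i list set \<Rightarrow> nat \<Rightarrow> nat \<Rightarrow> ('i list \<times> 'i list) set" where
  "pairs_B V m n = V \<times> ext_set V 1 (m - n + 1)"

definition pairs_C :: "'i list set \<Rightarrow> nat \<Rightarrow> nat \<Rightarrow> ('i list \<times> 'i list) set" where
  "pairs_C V m n = {(\<alpha>, \<beta>). (\<exists>u. \<beta> = \<alpha> @ u) \<and> \<alpha> \<in> ext_set V 1 (m - n + 1) \<and> \<beta> \<in> ext_set V 1 (m - n + 1)}"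

definition distinguished :: "('i list \<times> 'i list) set \<Rightarrow> 's \<Rightarrow> ('s \<Rightarrow> 'i \<Rightarrow> 's) \<Rightarrow> ('s \<Rightarrow> 'i \<Rightarrow> 'o)
     \<Rightarrow> ('i list \<times> 'i list) set" where
  "distinguished P q0 d w = {(\<alpha>, \<beta>) \<in> P. Delta q0 d w \<alpha> \<beta> \<noteq> {}}"

definition passes :: "'t \<Rightarrow> ('t \<Rightarrow> 'i \<Rightarrow> 't) \<Rightarrow> ('t \<Rightarrow> 'i \<Rightarrow> 'o)
     \<Rightarrow> 's \<Rightarrow> ('s \<Rightarrow> 'i \<Rightarrow> 's) \<Rightarrow> ('s \<Rightarrow> 'i \<Rightarrow> 'o) \<Rightarrow> 'i list set \<Rightarrow> bool" where
  "passes s0 dS wS q0 d w TS \<longleftrightarrow> (\<forall>xs\<in>TS. omega_star dS wS s0 xs = omega_star d w q0 xs)"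

end

theory Submission
  imports Defs
begin

lemma ds_app: "delta_star d q (xs @ ys) = delta_star d (delta_star d q xs) ys"
  by (induction xs arbitrary: q) auto

lemma os_app: "omega_star d w q (xs @ ys) = omega_star d w q xs @ omega_star d w (delta_star d q xs) ys"
  by (induction xs arbitrary: q) auto

lemma os_len: "length (omega_star d w q xs) = length xs"
  by (induction xs arbitrary: q) auto

lemma ds_closed: "dfsm Q q0 d w \<Longrightarrow> q \<in> Q \<Longrightarrow> delta_star d q xs \<in> Q"
  by (induction xs arbitrary: q) (auto simp: dfsm_def)

lemma pass_suffix:
  assumes "passes s0 dS wS q0 d w TS" "\<sigma> @ \<gamma> \<in> TS"
  shows "omega_star dS wS (delta_star dS s0 \<sigma>) \<gamma> = omega_star d w (delta_star d q0 \<sigma>) \<gamma>"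
proof -
  have "omega_star dS wS s0 (\<sigma> @ \<gamma>) = omega_star d w q0 (\<sigma> @ \<gamma>)"
    using assms by (auto simp: passes_def)
  then show ?thesis unfolding os_app using os_len
    by (metis append_eq_append_conv)
qed

lemma relabel:
  assumes "dfsm Q1 q1 d1 (w1 :: 's \<Rightarrow> 'i \<Rightarrow> 'o)"
  shows "\<exists>(Q'::nat set) q0' d' (w'::nat \<Rightarrow> 'i \<Rightarrow> 'o). dfsm Q' q0' d' w' \<and>
           fsm_lang q0' d' w' = fsm_lang q1 d1 w1 \<and> card Q' = card Q1"
proof -
  from assms have fin: "finite Q1" and q1: "q1 \<in> Q1" and cl: "\<And>q x. q \<in> Q1 \<Longrightarrow> d1 q x \<in> Q1"
    by (auto simp: dfsm_def)
  then obtain g :: "'s \<Rightarrow> nat" and N where "g ` Q1 = {i. i < N}" and inj: "inj_on g Q1"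
    using finite_imp_inj_to_nat_seg by blast
  define h where "h = the_inv_into Q1 g"
  have hg: "q \<in> Q1 \<Longrightarrow> h (g q) = q" for q using the_inv_into_f_f[OF inj] h_def by simp
  define d' where "d' i x = g (d1 (h i) x)" for i x
  define w' where "w' i x = w1 (h i) x" for i x
  have om: "q \<in> Q1 \<Longrightarrow> omega_star d' w' (g q) xs = omega_star d1 w1 q xs" for q xs
  proof (induction xs arbitrary: q)
    case Nil then show ?case by simp
  next
    case (Cons x xs)
    have "d' (g q) x = g (d1 q x)" using Cons.prems hg d'_def by simp
    then show ?case using Cons cl hg w'_def by simp
  qed
  have "dfsm (g ` Q1) (g q1) d' w'"
    unfolding dfsm_def using fin q1 cl hg d'_def by auto
  moreover have "fsm_lang (g q1) d' w' = fsm_lang q1 d1 w1"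
    unfolding fsm_lang_def using om q1 by simp
  moreover have "card (g ` Q1) = card Q1" using card_image[OF inj] .
  ultimately show ?thesis by blast
qed

lemma prime_dist:
  assumes pr: "prime_dfsm Q q0 d w" and p: "p \<in> Q" "p' \<in> Q" "p \<noteq> p'"
  shows "\<exists>\<gamma>. omega_star d w p \<gamma> \<noteq> omega_star d w p' \<gamma>"
proof (rule ccontr)
  assume "\<not> ?thesis"
  hence eq: "\<And>\<gamma>. omega_star d w p \<gamma> = omega_star d w p' \<gamma>" by auto
  define f where "f s = (if s = p' then p else s)" for s
  define d1 where "d1 q x = f (d q x)" for q x
  have fe: "omega_star d w (f s) ys = omega_star d w s ys" for s ys
    using eq f_def by auto
  have om1: "omega_star d1 w q xs = omega_star d w q xs" for q xs
    by (induction xs arbitrary: q) (auto simp: d1_def fe)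
  have D: "dfsm Q q0 d w" using pr by (simp add: prime_dfsm_def)
  have "dfsm (Q - {p'}) (f q0) d1 w"
    using D p unfolding dfsm_def d1_def f_def by auto
  moreover have "fsm_lang (f q0) d1 w = fsm_lang q0 d w"
    unfolding fsm_lang_def om1 fe ..
  ultimately obtain Q' :: "nat set" and q0' d' w' where
    "dfsm Q' q0' d' w'" "fsm_lang q0' d' w' = fsm_lang q0 d w" "card Q' = card (Q - {p'})"
    using relabel by metis
  with pr have "card Q \<le> card (Q - {p'})" unfolding prime_dfsm_def by metis
  moreover have "finite Q" using D by (simp add: dfsm_def)
  ultimately show False using p card_Diff1_less[of Q p'] by simp
qed

lemma w_in_abs:
  assumes "\<forall>(q, x, Z) \<in> set R. q \<in> Q \<and> w q x \<in> Z \<and> Z \<subset> UNIV"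
  shows "w q x \<in> abs_output R q x"
proof (cases "map_of (map (\<lambda>(q, x, Z). ((q, x), Z)) R) (q, x)")
  case None then show ?thesis by (simp add: abs_output_def)
next
  case (Some Z)
  then have "((q, x), Z) \<in> set (map (\<lambda>(q, x, Z). ((q, x), Z)) R)" by (rule map_of_SomeD)
  then have "(q, x, Z) \<in> set R" by auto
  with assms Some show ?thesis by (auto simp: abs_output_def)
qed

lemma abs_Z:
  assumes "distinct (map (\<lambda>(q, x, Z). (q, x)) R)" "(q, x, Z) \<in> set R"
  shows "abs_output R q x = Z"
proof -
  have eqm: "map fst (map (\<lambda>(q, x, Z). ((q, x), Z)) R) = map (\<lambda>(q, x, Z). (q, x)) R"
    by (induction R) auto
  have "distinct (map fst (map (\<lambda>(q, x, Z). ((q, x), Z)) R))" by (subst eqm) (rule assms(1))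
  moreover have "((q, x), Z) \<in> set (map (\<lambda>(q, x, Z). ((q, x), Z)) R)" using assms by force
  ultimately show ?thesis by (simp add: abs_output_def map_of_is_SomeI)
qed


theorem theorem2:
  fixes Q :: "'s set" and q0 :: 's and d :: "'s \<Rightarrow> 'i::finite \<Rightarrow> 's" and w :: "'s \<Rightarrow> 'i \<Rightarrow> 'o::finite"
    and R :: "('s \<times> 'i \<times> 'o set) list"
    and V :: "'i list set" and m :: nat
    and St :: "'t set" and s0 :: 't and dS :: "'t \<Rightarrow> 'i \<Rightarrow> 't" and wS :: "'t \<Rightarrow> 'i \<Rightarrow> 'o"
    and TS :: "'i list set"
  assumes M_prime: "prime_dfsm Q q0 d w"
    and n2: "card Q \<ge> 2"
    and R_distinct: "distinct (map (\<lambda>(q, x, Z). (q, x)) R)"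
    and R_wf: "\<forall>(q, x, Z) \<in> set R. q \<in> Q \<and> w q x \<in> Z \<and> Z \<subset> UNIV"
    and V_eps: "[] \<in> V"
    and V_cover: "state_cover V Q q0 d"
    and m_ge: "m \<ge> card Q"
    and S_min: "prime_dfsm St s0 dS wS"
    and S_size: "card St \<le> m"
    and TS1: "ext_set V 0 (m - card Q + 1) \<subseteq> TS"
    and TS2: "\<forall>(\<alpha>, \<beta>) \<in> distinguished (pairs_A V) q0 d w
                 \<union> distinguished (pairs_B V m (card Q)) q0 d (abs_output R)
                 \<union> distinguished (pairs_C V m (card Q)) q0 d (abs_output R).
               \<exists>\<gamma> \<in> Delta q0 d w \<alpha> \<beta>. \<alpha> @ \<gamma> \<in> TS \<and> \<beta> @ \<gamma> \<in> TS"
    and pass: "passes s0 dS wS q0 d w TS"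
  shows "sat_reqs s0 dS wS q0 d R"
proof (rule ccontr)
  assume nsat: "\<not> sat_reqs s0 dS wS q0 d R"
  let ?A = "abs_output R"
  let ?k = "m - card Q + 1"
  define F where "F \<sigma> \<longleftrightarrow> (\<exists>x. wS (delta_star dS s0 \<sigma>) x \<notin> ?A (delta_star d q0 \<sigma>) x)" for \<sigma>
  have DM: "dfsm Q q0 d w" using M_prime by (simp add: prime_dfsm_def)
  have DS: "dfsm St s0 dS wS" using S_min by (simp add: prime_dfsm_def)
  from nsat obtain q x Z \<pi> where qxZ: "(q, x, Z) \<in> set R" and \<pi>: "delta_star d q0 \<pi> = q"
    and fl: "wS (delta_star dS s0 \<pi>) x \<notin> Z"
    unfolding sat_reqs_def sat_req_def Pi_set_def by auto
  have "?A q x = Z" using abs_Z[OF R_distinct qxZ] .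
  with \<pi> fl have "F ([] @ \<pi>)" unfolding F_def by auto
  then have "V_eps_ok": "(\<lambda>p. fst p \<in> V \<and> F (fst p @ snd p)) ([], \<pi>)" using V_eps by simp
  from ex_has_least_nat[where P="\<lambda>p. fst p \<in> V \<and> F (fst p @ snd p)" and k="([], \<pi>)" and m="\<lambda>p. length (snd p)", OF this]
  obtain v u where vV: "v \<in> V" and Fvu: "F (v @ u)"
    and mini: "\<And>v' u'. v' \<in> V \<Longrightarrow> F (v' @ u') \<Longrightarrow> length u \<le> length u'"
    by force
  from Fvu obtain y where fy: "wS (delta_star dS s0 (v @ u)) y \<notin> ?A (delta_star d q0 (v @ u)) y"
    unfolding F_def by auto
  have Dist: "delta_star dS s0 \<alpha> \<noteq> delta_star dS s0 \<beta>"
    if "(\<alpha>, \<beta>) \<in> distinguished (pairs_A V) q0 d w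
                 \<union> distinguished (pairs_B V m (card Q)) q0 d (abs_output R)
                 \<union> distinguished (pairs_C V m (card Q)) q0 d (abs_output R)" for \<alpha> \<beta>
  proof
    assume eqs: "delta_star dS s0 \<alpha> = delta_star dS s0 \<beta>"
    from TS2 that obtain \<gamma> where g: "\<gamma> \<in> Delta q0 d w \<alpha> \<beta>" "\<alpha> @ \<gamma> \<in> TS" "\<beta> @ \<gamma> \<in> TS"
      by blast
    from pass_suffix[OF pass g(2)] pass_suffix[OF pass g(3)] eqs g(1) show False
      by (simp add: Delta_def)
  qed
  have ulen: "?k \<le> length u"
  proof (rule ccontr)
    assume "\<not> ?thesis"
    then have "v @ u @ [y] \<in> ext_set V 0 ?k" unfolding ext_set_def using vV by force
    with TS1 have "(v @ u) @ [y] \<in> TS" by auto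
    from pass_suffix[OF pass this] have "wS (delta_star dS s0 (v @ u)) y = w (delta_star d q0 (v @ u)) y"
      by simp
    with fy w_in_abs[OF R_wf] show False by metis
  qed
  define tau where "tau j = v @ take j u" for j
  have L: "False" if v'V: "v' \<in> V" and eqS: "delta_star dS s0 (v' @ u'') = delta_star dS s0 (tau l)"
    and emp: "Delta q0 d ?A (v' @ u'') (tau l) = {}" and ll: "l \<le> length u" and lu: "length u'' < l"
    for v' u'' l
  proof -
    have vu: "v @ u = tau l @ drop l u" unfolding tau_def by simp
    have e1: "omega_star d ?A (delta_star d q0 (v' @ u'')) (drop l u @ [y])
            = omega_star d ?A (delta_star d q0 (tau l)) (drop l u @ [y])"
      using emp unfolding Delta_def by auto
    have "?A (delta_star d q0 ((v' @ u'') @ drop l u)) y = ?A (delta_star d q0 (v @ u)) y"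
      using e1 unfolding os_app vu ds_app by simp
    moreover have "delta_star dS s0 ((v' @ u'') @ drop l u) = delta_star dS s0 (v @ u)"
      using eqS by (metis vu ds_app)
    ultimately have "F (v' @ (u'' @ drop l u))" using fy unfolding F_def by auto
    from mini[OF v'V this] ll lu show False by simp
  qed
  have tauE: "tau j \<in> ext_set V 1 ?k" if "j \<in> {1..?k}" for j
    unfolding ext_set_def tau_def using that vV ulen by force
  obtain rep where rep: "\<And>q. q \<in> Q \<Longrightarrow> rep q \<in> V \<and> delta_star d q0 (rep q) = q"
    using V_cover unfolding state_cover_def by metis
  define X1 where "X1 = (\<lambda>q. delta_star dS s0 (rep q)) ` Q"
  define X2 where "X2 = (\<lambda>j. delta_star dS s0 (tau j)) ` {1..?k}"
  have inj1: "inj_on (\<lambda>q. delta_star dS s0 (rep q)) Q"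
  proof (rule inj_onI)
    fix p p' assume pp: "p \<in> Q" "p' \<in> Q" "delta_star dS s0 (rep p) = delta_star dS s0 (rep p')"
    show "p = p'"
    proof (rule ccontr)
      assume "p \<noteq> p'"
      from prime_dist[OF M_prime pp(1,2) this] rep pp
      have "(rep p, rep p') \<in> distinguished (pairs_A V) q0 d w"
        by (auto simp: distinguished_def pairs_A_def Delta_def)
      from Dist[of "rep p" "rep p'"] this pp(3) show False by blast
    qed
  qed
  have inj2: "inj_on (\<lambda>j. delta_star dS s0 (tau j)) {1..?k}"
  proof -
    have ne: "delta_star dS s0 (tau j) \<noteq> delta_star dS s0 (tau l)"
      if jl: "j \<in> {1..?k}" "l \<in> {1..?k}" "j < l" for j l
    proof
      assume eq: "delta_star dS s0 (tau j) = delta_star dS s0 (tau l)"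
      show False
      proof (cases "Delta q0 d ?A (tau j) (tau l) = {}")
        case True
        have "length (take j u) < l" using jl by simp
        then show False using L[of v "take j u" l] vV eq True jl ulen unfolding tau_def by simp
      next
        case False
        have "take l u = take j u @ drop j (take l u)" using jl
          by (metis append_take_drop_id min.absorb1 less_imp_le take_take)
        then have "tau l = tau j @ drop j (take l u)" unfolding tau_def by simp
        then have "(tau j, tau l) \<in> distinguished (pairs_C V m (card Q)) q0 d ?A"
          using False tauE jl unfolding distinguished_def pairs_C_def by blast
        with Dist eq show False by blast
      qed
    qed
    show ?thesis
    proof (rule inj_onI)
      fix j l assume "j \<in> {1..?k}" "l \<in> {1..?k}" "delta_star dS s0 (tau j) = delta_star dS s0 (tau l)"
      then show "j = l" using ne ne[of l j] by (metis linorder_neqE_nat)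
    qed
  qed
  have disj: "X1 \<inter> X2 = {}"
  proof -
    have "delta_star dS s0 (rep q) \<noteq> delta_star dS s0 (tau j)" if "q \<in> Q" "j \<in> {1..?k}" for q j
    proof
      assume eq: "delta_star dS s0 (rep q) = delta_star dS s0 (tau j)"
      show False
      proof (cases "Delta q0 d ?A (rep q) (tau j) = {}")
        case True
        then show False using L[of "rep q" "[]" j] rep that eq ulen by auto
      next
        case False
        then have "(rep q, tau j) \<in> distinguished (pairs_B V m (card Q)) q0 d ?A"
          using tauE that rep unfolding distinguished_def pairs_B_def by blast
        with Dist eq show False by blast
      qed
    qed
    then show ?thesis unfolding X1_def X2_def by auto
  qed
  have sub: "X1 \<union> X2 \<subseteq> St"
    unfolding X1_def X2_def using ds_closed[OF DS] DS by (auto simp: dfsm_def)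
  have finSt: "finite St" using DS by (simp add: dfsm_def)
  have finQ: "finite Q" using DM by (simp add: dfsm_def)
  have "card (X1 \<union> X2) = card Q + ?k"
    using card_Un_disjoint[of X1 X2] disj finQ card_image[OF inj1] card_image[OF inj2]
    unfolding X1_def X2_def by simp
  moreover have "card (X1 \<union> X2) \<le> card St" using card_mono[OF finSt sub] .
  ultimately show False using S_size m_ge by simp
qed

end
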